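(* Let $n\in\mathbb{N}$, $n\geq 2$, let $l\in(0,\frac{2}{n})$ and let $\alpha$ satisfy $\frac{2}{n}\leq\alpha<1+\frac{1}{n}-\frac{l}{2}$. Then there exist $\theta$ with $1<\theta<\frac{n}{n-2}$ and $\mu>\frac{n}{2}$ such that $$\frac{l(2\mu-1)}{4\mu-n}<\frac{n(\theta+1-2\alpha\theta)+2\theta}{2n\theta+n^2-n^2\theta}.$$
   Context: For $n=2$ the condition $1<\theta<\frac{n}{n-2}$ is understood as $\theta>1$. *)

theory Defs
  imports Complex_Main
begin

end

theory Submission
  imports Defs "HOL-Real_Asymp.Real_Asymp"
begin

theorem lemma4p4:
  fixes n :: nat and l \<alpha> :: real
  assumes "n \<ge> 2"
    and "0 < l" and "l < 2 / real n"
    and "2 / real n \<le> \<alpha>" and "\<alpha> < 1 + 1 / real n - l / 2"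
  shows "\<exists>\<theta> \<mu> :: real. 1 < \<theta> \<and> (n = 2 \<or> \<theta> < real n / (real n - 2)) \<and> \<mu> > real n / 2 \<and>
    l * (2 * \<mu> - 1) / (4 * \<mu> - real n) <
      (real n * (\<theta> + 1 - 2 * \<alpha> * \<theta>) + 2 * \<theta>) / (2 * real n * \<theta> + (real n)^2 - (real n)^2 * \<theta>)"
proof -
  define c where "c = 1 - \<alpha> + 1 / real n"
  define e where "e = c - l/2"
  have e: "e > 0" using assms unfolding e_def c_def by simp
  have n0: "real n > 0" using assms by simp
  let ?R = "\<lambda>\<theta>::real. (real n * (\<theta> + 1 - 2 * \<alpha> * \<theta>) + 2 * \<theta>) / (2 * real n * \<theta> + (real n)^2 - (real n)^2 * \<theta>)"
  have "(?R \<longlongrightarrow> ?R 1) (at 1)"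
    using n0 by (intro tendsto_intros) (auto simp: power2_eq_square)
  moreover have "?R 1 = c" using n0 unfolding c_def by (simp add: field_simps power2_eq_square)
  ultimately have "(?R \<longlongrightarrow> c) (at_right 1)"
    using filterlim_at_split by blast
  then have ev1: "eventually (\<lambda>\<theta>. ?R \<theta> > l/2 + e/2) (at_right 1)"
    using e unfolding e_def by (intro order_tendstoD) (auto simp: field_simps)
  have ev2: "eventually (\<lambda>\<theta>. n = 2 \<or> \<theta> < real n / (real n - 2)) (at_right 1)"
  proof (cases "n = 2")
    case True then show ?thesis by simp
  next
    case False
    then have "real n / (real n - 2) > 1" using assms by (simp add: field_simps)
    then show ?thesis unfolding eventually_at_right_field by (intro exI[of _ "real n / (real n - 2)"]) auto
  qed
  have "eventually (\<lambda>\<theta>. ?R \<theta> > l/2 + e/2 \<and> (n = 2 \<or> \<theta> < real n / (real n - 2))) (at_right 1)"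
    using ev1 ev2 by (rule eventually_conj)
  then obtain b where b: "b > 1" "\<And>y. y > 1 \<Longrightarrow> y < b \<Longrightarrow> ?R y > l/2 + e/2 \<and> (n = 2 \<or> y < real n / (real n - 2))"
    unfolding eventually_at_right_field by auto
  define \<theta> where "\<theta> = (1 + b) / 2"
  have th: "\<theta> > 1" "\<theta> < b" using b unfolding \<theta>_def by auto
  have "((\<lambda>\<mu>::real. l * (2 * \<mu> - 1) / (4 * \<mu> - real n)) \<longlongrightarrow> l/2) at_top"
    by real_asymp
  then have "eventually (\<lambda>\<mu>::real. l * (2 * \<mu> - 1) / (4 * \<mu> - real n) < l/2 + e/2) at_top"
    using e by (intro order_tendstoD) auto
  moreover have "eventually (\<lambda>\<mu>::real. \<mu> > real n / 2) at_top" by (rule eventually_gt_at_top)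
  ultimately have "eventually (\<lambda>\<mu>::real. l * (2 * \<mu> - 1) / (4 * \<mu> - real n) < l/2 + e/2 \<and> \<mu> > real n / 2) at_top"
    by (rule eventually_conj)
  then obtain N :: real where N: "\<And>\<mu>. \<mu> \<ge> N \<Longrightarrow> l * (2 * \<mu> - 1) / (4 * \<mu> - real n) < l/2 + e/2 \<and> \<mu> > real n / 2"
    unfolding eventually_at_top_linorder by auto
  have A: "l * (2 * N - 1) / (4 * N - real n) < l/2 + e/2" "N > real n / 2" using N[of N] by auto
  have B: "?R \<theta> > l/2 + e/2" "n = 2 \<or> \<theta> < real n / (real n - 2)" using b(2)[OF th] by auto
  show ?thesis
    apply (rule exI[of _ \<theta>], rule exI[of _ N])
    using A B th(1) by linarith
qed

end
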